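(* Let $\ell_1,\dots,\ell_n:\mathbb{R}^d\to\mathbb{R}$ be twice continuously differentiable, let $T\subseteq[n]$, and suppose $L_T\defeq\sum_{i\notin T}\ell_i$ is convex on $\mathbb{R}^d$. Let $\hat{\theta}$ be a point with $\sum_{i=1}^n\nabla\ell_i(\hat\theta)=0$, and let $\hat\theta_T$ be any point with $\nabla L_T(\hat\theta_T)=0$. Write $g_\theta=\nabla L_T(\theta)$, $H_\theta=\nabla^2L_T(\theta)$, $g=g_{\hat\theta}$, $H=H_{\hat\theta}$, assume $H$ is invertible, and set $\hat\theta_T^{\mathrm{NS}}\defeq\hat\theta-H^{-1}g$. Let $\Sigma$ be a positive-definite $d\times d$ matrix, $r>0$, and $\mathcal{B}\defeq\{\hat\theta_T^{\mathrm{NS}}+e:\ \|e\|_\Sigma\le r\}$. Assume: (i) (strong convexity in $\mathcal B$) $H_\theta$ is invertible and $\|\Sigma^{1/2}H_\theta^{-1}\Sigma^{1/2}\|_{\mathrm{op}}\le C_{\mathrm{op}}$ for all $\theta\in\mathcal{B}$; (ii) (mildly Lipschitz Hessian) $\|(H_\theta-H)H^{-1}g\|_{\Sigma^{-1}}\le C_h$ for all $\theta=t\hat\theta+(1-t)\hat\theta_T^{\mathrm{NS}}$, $t\in[0,1]$; (iii) $C_hC_{\mathrm{op}}<r$. Then $\|\hat\theta_T-\hat\theta_T^{\mathrm{NS}}\|_\Sigma\le C_hC_{\mathrm{op}}$.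
   Context: For a positive-definite matrix $M$, $\|v\|_M\defeq\sqrt{v^\top Mv}$. $\|\cdot\|_{\mathrm{op}}$ is the spectral (operator) norm. $\hat\theta_T^{\mathrm{NS}}$ is the "single Newton step" estimate of the model retrained without the samples in $T$. *)

theory Defs
  imports "HOL-Analysis.Analysis"
begin

definition grad :: "(real^'d \<Rightarrow> real) \<Rightarrow> real^'d \<Rightarrow> real^'d" where
  "grad f x = (\<chi> j. frechet_derivative f (at x) (axis j 1))"

definition hess :: "(real^'d \<Rightarrow> real) \<Rightarrow> real^'d \<Rightarrow> real^'d^'d" where
  "hess f x = (\<chi> i j. frechet_derivative (\<lambda>y. grad f y $ i) (at x) (axis j 1))"

definition C2 :: "(real^'d \<Rightarrow> real) \<Rightarrow> bool" where
  "C2 f \<longleftrightarrow> (\<forall>x. f differentiable (at x)) \<and> (\<forall>x. grad f differentiable (at x))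
     \<and> continuous_on UNIV (hess f)"

definition pos_def :: "real^'d^'d \<Rightarrow> bool" where
  "pos_def M \<longleftrightarrow> transpose M = M \<and> (\<forall>v. v \<noteq> 0 \<longrightarrow> v \<bullet> (M *v v) > 0)"

definition mnorm :: "real^'d^'d \<Rightarrow> real^'d \<Rightarrow> real" where
  "mnorm M v = sqrt (v \<bullet> (M *v v))"

definition msqrt :: "real^'d^'d \<Rightarrow> real^'d^'d" where
  "msqrt M = (THE S. pos_def S \<and> S ** S = M)"

definition opnorm :: "real^'d^'d \<Rightarrow> real" where
  "opnorm A = onorm (\<lambda>x. A *v x)"

end

theory Submission
  imports Defs
begin

lemma sym_inner:
  fixes M :: "real^'n^'n"
  assumes "transpose M = M"
  shows "(M *v x) \<bullet> y = x \<bullet> (M *v y)"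
proof -
  have "(M *v x) \<bullet> y = (transpose M *v x) \<bullet> y" using assms by simp
  also have "\<dots> = (x v* M) \<bullet> y" by simp
  also have "\<dots> = x \<bullet> (M *v y)" by (rule dot_lmul_matrix)
  finally show ?thesis .
qed

lemma sym_by_inner:
  fixes M :: "real^'n^'n"
  assumes "\<And>x y. (M *v x) \<bullet> y = x \<bullet> (M *v y)"
  shows "transpose M = M"
proof -
  have "transpose M *v x = M *v x" for x
  proof -
    have "(x v* M - M *v x) \<bullet> y = 0" for y
      using assms[of x y] dot_lmul_matrix[of x M y] by (simp add: inner_diff_left)
    from this[of "x v* M - M *v x"] show ?thesis by simp
  qed
  then show ?thesis by (simp add: matrix_eq)
qed

lemma matrix_inv_props:
  fixes A :: "real^'n^'n"
  assumes "invertible A"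
  shows "A ** matrix_inv A = mat 1" "matrix_inv A ** A = mat 1"
proof -
  from assms obtain A' where "A ** A' = mat 1 \<and> A' ** A = mat 1" unfolding invertible_def by blast
  hence "A ** matrix_inv A = mat 1 \<and> matrix_inv A ** A = mat 1"
    unfolding matrix_inv_def by (rule someI)
  thus "A ** matrix_inv A = mat 1" "matrix_inv A ** A = mat 1" by auto
qed

lemma matrix_inv_vec:
  fixes A :: "real^'n^'n"
  assumes "invertible A"
  shows "A *v (matrix_inv A *v x) = x" "matrix_inv A *v (A *v x) = x"
  using matrix_inv_props[OF assms] by (simp_all add: matrix_vector_mul_assoc)

lemma pos_def_invertible:
  fixes S :: "real^'n^'n"
  assumes "pos_def S" shows "invertible S"
proof -
  have "inj ((*v) S)"
  proof (rule injI)
    fix x y assume "S *v x = S *v y"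
    hence "S *v (x - y) = 0" by (simp add: matrix_vector_mult_diff_distrib)
    hence "(x - y) \<bullet> (S *v (x - y)) = 0" by simp
    thus "x = y" using assms unfolding pos_def_def by (metis less_irrefl right_minus_eq)
  qed
  thus ?thesis
    by (metis matrix_left_invertible_injective invertible_left_inverse)
qed

lemma psd_cs:
  fixes A :: "real^'n^'n"
  assumes sym: "transpose A = A" and psd: "\<And>v. v \<bullet> (A *v v) \<ge> 0"
  shows "(x \<bullet> (A *v y))^2 \<le> (x \<bullet> (A *v x)) * (y \<bullet> (A *v y))"
proof -
  let ?a = "x \<bullet> (A *v x)" and ?b = "x \<bullet> (A *v y)" and ?c = "y \<bullet> (A *v y)"
  have yx: "y \<bullet> (A *v x) = ?b" using sym_inner[OF sym, of y x] by (simp add: inner_commute)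
  have q: "?a + 2 * t * ?b + t^2 * ?c \<ge> 0" for t
  proof -
    have "(x + t *\<^sub>R y) \<bullet> (A *v (x + t *\<^sub>R y)) \<ge> 0" by (rule psd)
    also have "(x + t *\<^sub>R y) \<bullet> (A *v (x + t *\<^sub>R y)) = ?a + 2 * t * ?b + t^2 * ?c"
      using yx by (simp add: matrix_vector_right_distrib matrix_vector_mult_scaleR inner_add_left inner_add_right power2_eq_square algebra_simps)
    finally show ?thesis .
  qed
  show ?thesis
  proof (cases "?c = 0")
    case True
    have "?b = 0"
    proof (rule ccontr)
      assume nz: "?b \<noteq> 0"
      have "?a + 2 * (- (?a + 1) / (2 * ?b)) * ?b + (- (?a + 1) / (2 * ?b))^2 * ?c \<ge> 0" by (rule q)
      with True nz show False by (simp add: field_simps)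
    qed
    thus ?thesis using True by simp
  next
    case False
    hence cpos: "?c > 0" using psd[of y] by simp
    have "?a + 2 * (- ?b / ?c) * ?b + (- ?b / ?c)^2 * ?c \<ge> 0" by (rule q)
    hence "?a - ?b^2 / ?c \<ge> 0" using cpos by (simp add: field_simps power2_eq_square)
    hence "?b^2 / ?c \<le> ?a" by simp
    thus ?thesis using cpos by (simp add: field_simps mult.commute)
  qed
qed

lemma lin_quad_zero:
  fixes c K :: real
  assumes "\<And>t. 2 * t * c + t^2 * K \<le> 0"
  shows "c = 0"
proof (rule ccontr)
  assume nz: "c \<noteq> 0"
  define t where "t = c / (\<bar>K\<bar> + 1)"
  have d: "\<bar>K\<bar> + 1 > 0" by simp
  have "2 * t * c = 2 * c^2 / (\<bar>K\<bar> + 1)" unfolding t_def by (simp add: power2_eq_square)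
  moreover have "t^2 * K \<ge> - (c^2 / (\<bar>K\<bar> + 1))"
  proof -
    have "t^2 * K \<ge> - (t^2 * \<bar>K\<bar>)" using mult_left_mono[of "-\<bar>K\<bar>" K "t^2"] by simp
    moreover have "t^2 * \<bar>K\<bar> \<le> c^2 / (\<bar>K\<bar> + 1)"
    proof -
      have "t^2 * \<bar>K\<bar> = c^2 * \<bar>K\<bar> / (\<bar>K\<bar> + 1)^2" unfolding t_def by (simp add: power_divide)
      also have "\<dots> \<le> c^2 * (\<bar>K\<bar> + 1) / (\<bar>K\<bar> + 1)^2"
        by (intro divide_right_mono mult_left_mono) auto
      also have "\<dots> = c^2 / (\<bar>K\<bar> + 1)" by (simp add: power2_eq_square)
      finally show ?thesis .
    qed
    ultimately show ?thesis by linarith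
  qed
  moreover have "c^2 / (\<bar>K\<bar> + 1) > 0" using nz by simp
  ultimately have "2 * t * c + t^2 * K > 0" by linarith
  with assms[of t] show False by simp
qed

lemma eig_exists_in:
  fixes M :: "real^'n^'n"
  assumes sym: "transpose M = M" and V: "subspace V" and nz: "x \<in> V" "x \<noteq> 0"
    and inv: "\<And>v. v \<in> V \<Longrightarrow> M *v v \<in> V"
  shows "\<exists>w\<in>V. norm w = 1 \<and> M *v w = (w \<bullet> (M *v w)) *\<^sub>R w"
proof -
  let ?K = "V \<inter> sphere 0 1"
  have "compact ?K"
    using closed_subspace[OF V] compact_sphere by (rule closed_Int_compact)
  moreover have "(1 / norm x) *\<^sub>R x \<in> ?K" using nz V by (simp add: subspace_scale)
  hence "?K \<noteq> {}" by blast
  moreover have "continuous_on ?K (\<lambda>v. v \<bullet> (M *v v))"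
    by (intro continuous_intros linear_continuous_on matrix_vector_mul_bounded_linear)
  ultimately obtain w where wK: "w \<in> ?K" and wmax0: "\<forall>y\<in>?K. y \<bullet> (M *v y) \<le> w \<bullet> (M *v w)"
    using continuous_attains_sup[of ?K "\<lambda>v. v \<bullet> (M *v v)"] by blast
  have wmax: "\<And>y. y \<in> ?K \<Longrightarrow> y \<bullet> (M *v y) \<le> w \<bullet> (M *v w)" using wmax0 by blast
  define l where "l = w \<bullet> (M *v w)"
  have wV: "w \<in> V" and w1: "norm w = 1" using wK by auto
  have ww: "w \<bullet> w = 1" using w1 by (simp add: dot_square_norm)
  have bound: "y \<bullet> (M *v y) \<le> l * (y \<bullet> y)" if yV: "y \<in> V" for y
  proof (cases "y = 0")
    case True thus ?thesis by simp
  next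
    case False
    let ?y = "(1 / norm y) *\<^sub>R y"
    have "?y \<in> ?K" using yV False V by (simp add: subspace_scale)
    hence "?y \<bullet> (M *v ?y) \<le> l" using wmax l_def by blast
    hence "(y \<bullet> (M *v y)) / (norm y)^2 \<le> l"
      by (simp add: matrix_vector_mult_scaleR power2_eq_square)
    thus ?thesis using False by (simp add: divide_le_eq dot_square_norm mult.commute)
  qed
  have orth0: "z \<bullet> (M *v w) = 0" if zV: "z \<in> V" and zw: "z \<bullet> w = 0" for z
  proof -
    let ?c = "z \<bullet> (M *v w)"
    have sw: "w \<bullet> (M *v z) = ?c" using sym_inner[OF sym, of w z] by (simp add: inner_commute)
    have "2 * t * ?c + t^2 * (z \<bullet> (M *v z) - l * (z \<bullet> z)) \<le> 0" for t
    proof -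
      have "(w + t *\<^sub>R z) \<in> V" using wV zV V by (simp add: subspace_add subspace_scale)
      hence h1: "(w + t *\<^sub>R z) \<bullet> (M *v (w + t *\<^sub>R z)) \<le> l * ((w + t *\<^sub>R z) \<bullet> (w + t *\<^sub>R z))"
        by (rule bound)
      have h2: "(w + t *\<^sub>R z) \<bullet> (M *v (w + t *\<^sub>R z)) = l + 2 * t * ?c + t^2 * (z \<bullet> (M *v z))"
        using sw l_def by (simp add: matrix_vector_right_distrib matrix_vector_mult_scaleR inner_add_left inner_add_right power2_eq_square algebra_simps)
      have h3: "(w + t *\<^sub>R z) \<bullet> (w + t *\<^sub>R z) = 1 + t^2 * (z \<bullet> z)"
        using ww zw by (simp add: inner_add_left inner_add_right power2_eq_square inner_commute)
      have "l + 2 * t * ?c + t^2 * (z \<bullet> (M *v z)) \<le> l * (1 + t^2 * (z \<bullet> z))"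
        using h1 unfolding h2 h3 .
      thus ?thesis by (simp add: algebra_simps)
    qed
    thus ?thesis by (rule lin_quad_zero)
  qed
  define z where "z = M *v w - l *\<^sub>R w"
  have zV: "z \<in> V" unfolding z_def using inv[OF wV] wV V by (simp add: subspace_diff subspace_scale)
  have zw: "z \<bullet> w = 0" unfolding z_def using ww l_def by (simp add: inner_diff_left inner_commute[of "M *v w" w])
  have "z \<bullet> z = z \<bullet> (M *v w) - l * (z \<bullet> w)" unfolding z_def by (simp add: inner_diff_right)
  also have "\<dots> = 0" using orth0[OF zV zw] zw by simp
  finally have "z = 0" by simp
  hence "M *v w = l *\<^sub>R w" unfolding z_def by simp
  thus ?thesis using wV w1 l_def by blast
qed

lemma spectral_partial:
  fixes M :: "real^'n^'n"
  assumes sym: "transpose M = M"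
  shows "k \<le> CARD('n) \<Longrightarrow> \<exists>e lam. (\<forall>i<k. \<forall>j<k. e i \<bullet> e j = (if i = j then 1 else 0)) \<and>
            (\<forall>i<k. M *v e i = lam i *\<^sub>R e i)"
proof (induction k)
  case 0 show ?case by simp
next
  case (Suc k)
  then obtain e lam where on: "\<forall>i<k. \<forall>j<k. e i \<bullet> e j = (if i = j then 1 else 0)"
     and ev: "\<forall>i<k. M *v e i = lam i *\<^sub>R e i" by fastforce
  define V where "V = {v. \<forall>i<k. e i \<bullet> v = 0}"
  have V: "subspace V" unfolding V_def subspace_def by (simp add: inner_add_right)
  have "dim (e ` {..<k}) \<le> card (e ` {..<k})" by (rule dim_le_card') simp
  also have "\<dots> \<le> k" using card_image_le[of "{..<k}" e] by simp
  also have "k < DIM(real^'n)" using Suc.prems by simp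
  finally obtain x where x: "x \<noteq> 0" "\<And>y. y \<in> span (e ` {..<k}) \<Longrightarrow> orthogonal x y"
    using orthogonal_to_subspace_exists by blast
  have xV: "x \<in> V" unfolding V_def
  proof safe
    fix i assume "i < k"
    hence "e i \<in> span (e ` {..<k})" by (simp add: span_base)
    thus "e i \<bullet> x = 0" using x(2) by (metis orthogonal_def inner_commute)
  qed
  have inv: "M *v v \<in> V" if "v \<in> V" for v
    using that ev unfolding V_def
    by (auto simp: sym_inner[OF sym, symmetric])
  obtain w where wV: "w \<in> V" and w1: "norm w = 1" and wev: "M *v w = (w \<bullet> (M *v w)) *\<^sub>R w"
    using eig_exists_in[OF sym V xV x(1) inv] by blast
  define e' where "e' = e(k := w)"
  define lam' where "lam' = lam(k := w \<bullet> (M *v w))"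
  have ww: "w \<bullet> w = 1" using w1 by (simp add: dot_square_norm)
  have ew: "i < k \<Longrightarrow> e i \<bullet> w = 0" for i using wV unfolding V_def by auto
  have "\<forall>i<Suc k. \<forall>j<Suc k. e' i \<bullet> e' j = (if i = j then 1 else 0)"
    using on ew ww unfolding e'_def by (auto simp: less_Suc_eq inner_commute)
  moreover have "\<forall>i<Suc k. M *v e' i = lam' i *\<^sub>R e' i"
    using ev wev unfolding e'_def lam'_def by (auto simp: less_Suc_eq)
  ultimately show ?case by blast
qed

lemma spectral:
  fixes M :: "real^'n^'n"
  assumes sym: "transpose M = M"
  shows "\<exists>e lam. (\<forall>i<CARD('n). \<forall>j<CARD('n). e i \<bullet> e j = (if i = j then 1 else 0)) \<and>
            (\<forall>i<CARD('n). M *v e i = lam i *\<^sub>R e i) \<and>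
            (\<forall>v. v = (\<Sum>i<CARD('n). (e i \<bullet> v) *\<^sub>R e i))"
proof -
  let ?n = "CARD('n)"
  obtain e lam where on: "\<forall>i<?n. \<forall>j<?n. e i \<bullet> e j = (if i = j then 1 else 0)"
     and ev: "\<forall>i<?n. M *v e i = lam i *\<^sub>R e i"
    using spectral_partial[OF sym, of ?n] by blast
  have exp: "v = (\<Sum>i<?n. (e i \<bullet> v) *\<^sub>R e i)" for v
  proof (rule ccontr)
    assume ne: "v \<noteq> (\<Sum>i<?n. (e i \<bullet> v) *\<^sub>R e i)"
    define p where "p = v - (\<Sum>i<?n. (e i \<bullet> v) *\<^sub>R e i)"
    have p0: "p \<noteq> 0" using ne unfolding p_def by simp
    have pe: "e j \<bullet> p = 0" if "j < ?n" for j
    proof -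
      have "e j \<bullet> (\<Sum>i<?n. (e i \<bullet> v) *\<^sub>R e i) = (\<Sum>i<?n. (e i \<bullet> v) * (e j \<bullet> e i))"
        by (simp add: inner_sum_right)
      also have "\<dots> = (\<Sum>i<?n. if i = j then e i \<bullet> v else 0)"
        using on that by (intro sum.cong) auto
      also have "\<dots> = e j \<bullet> v" using that by simp
      finally show ?thesis unfolding p_def by (simp add: inner_diff_right)
    qed
    define S where "S = insert p (e ` {..<?n})"
    have einj: "inj_on e {..<?n}"
    proof (rule inj_onI)
      fix i j assume "i \<in> {..<?n}" "j \<in> {..<?n}" "e i = e j"
      thus "i = j" using on by (metis lessThan_iff zero_neq_one)
    qed
    have pnot: "p \<notin> e ` {..<?n}"
    proof
      assume "p \<in> e ` {..<?n}"
      then obtain j where "j < ?n" "p = e j" by auto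
      thus False using pe[of j] on p0 by auto
    qed
    have "pairwise orthogonal S" unfolding S_def pairwise_def orthogonal_def
      using on pe by (auto simp: inner_commute)
    moreover have "0 \<notin> S" unfolding S_def using p0 on by force
    ultimately have "independent S" by (rule pairwise_orthogonal_independent)
    hence "card S \<le> DIM(real^'n)" using independent_bound by blast
    moreover have "card S = Suc ?n" unfolding S_def using pnot card_image[OF einj] by simp
    ultimately show False by simp
  qed
  show ?thesis using on ev exp by blast
qed

lemma mat_sum_apply:
  fixes D :: "real^'n^'n"
  shows "D *v (\<Sum>i\<in>I. c i *\<^sub>R e i) = (\<Sum>i\<in>I. c i *\<^sub>R (D *v e i))"
  by (simp add: linear_sum[OF matrix_vector_mul_linear] matrix_vector_mult_scaleR o_def)

lemma sqrt_exists:
  fixes Sig :: "real^'n^'n"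
  assumes pd: "pos_def Sig"
  shows "\<exists>S. pos_def S \<and> S ** S = Sig"
proof -
  let ?n = "CARD('n)"
  have sym: "transpose Sig = Sig" using pd unfolding pos_def_def by simp
  obtain e lam where on: "\<forall>i<?n. \<forall>j<?n. e i \<bullet> e j = (if i = j then 1 else 0)"
     and ev: "\<forall>i<?n. Sig *v e i = lam i *\<^sub>R e i"
     and exp: "\<forall>v. v = (\<Sum>i<?n. (e i \<bullet> v) *\<^sub>R e i)"
    using spectral[OF sym] by blast
  have lampos: "lam i > 0" if "i < ?n" for i
  proof -
    have "e i \<noteq> 0" using on that by (metis inner_zero_left zero_neq_one)
    hence "e i \<bullet> (Sig *v e i) > 0" using pd unfolding pos_def_def by blast
    thus ?thesis using ev on that by simp
  qed
  define f where "f = (\<lambda>v. \<Sum>i<?n. (sqrt (lam i) * (e i \<bullet> v)) *\<^sub>R e i)"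
  have lin: "linear f"
    by (rule linearI) (simp_all add: f_def inner_add_right distrib_left scaleR_add_left sum.distrib scaleR_sum_right mult.left_commute)
  have f_app: "f w = (\<Sum>i<?n. (sqrt (lam i) * (e i \<bullet> w)) *\<^sub>R e i)" for w by (simp add: f_def)
  define S where "S = matrix f"
  have Sv: "S *v v = f v" for v unfolding S_def using matrix_vector_mul(2)[OF lin] by metis
  have ef: "e j \<bullet> f v = sqrt (lam j) * (e j \<bullet> v)" if "j < ?n" for j v
  proof -
    have "e j \<bullet> f v = (\<Sum>i<?n. (sqrt (lam i) * (e i \<bullet> v)) * (e j \<bullet> e i))"
      unfolding f_def by (simp add: inner_sum_right)
    also have "\<dots> = (\<Sum>i<?n. if i = j then sqrt (lam j) * (e j \<bullet> v) else 0)"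
      using on that by (intro sum.cong) auto
    also have "\<dots> = sqrt (lam j) * (e j \<bullet> v)" using that by simp
    finally show ?thesis .
  qed
  have SS: "S ** S = Sig"
  proof (subst matrix_eq, intro allI)
    fix v
    have "(S ** S) *v v = f (f v)" by (simp add: Sv flip: matrix_vector_mul_assoc)
    also have "\<dots> = (\<Sum>i<?n. (lam i * (e i \<bullet> v)) *\<^sub>R e i)"
      unfolding f_app[of "f v"] using ef lampos
      by (intro sum.cong) (auto simp: real_sqrt_mult[symmetric] less_imp_le)
    also have "\<dots> = (\<Sum>i<?n. (e i \<bullet> v) *\<^sub>R (Sig *v e i))"
      using ev by (intro sum.cong) auto
    also have "\<dots> = Sig *v v" using exp[rule_format, of v] mat_sum_apply[of Sig "\<lambda>i. e i \<bullet> v" e "{..<?n}"]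
      by simp
    finally show "(S ** S) *v v = Sig *v v" .
  qed
  have fx: "f x \<bullet> y = (\<Sum>i<?n. sqrt (lam i) * (e i \<bullet> x) * (e i \<bullet> y))" for x y
    unfolding f_def by (simp add: inner_sum_left mult.assoc)
  have Ssym: "transpose S = S"
    by (rule sym_by_inner) (simp add: Sv fx inner_commute[of x "f y" for x y] mult_ac)
  have Spos: "v \<bullet> (S *v v) > 0" if "v \<noteq> 0" for v
  proof -
    have "\<exists>i<?n. e i \<bullet> v \<noteq> 0"
    proof (rule ccontr)
      assume "\<not> ?thesis"
      hence "(\<Sum>i<?n. (e i \<bullet> v) *\<^sub>R e i) = 0" by simp
      thus False using exp that by metis
    qed
    then obtain j where j: "j < ?n" "e j \<bullet> v \<noteq> 0" by blast
    have "v \<bullet> (S *v v) = (\<Sum>i<?n. sqrt (lam i) * (e i \<bullet> v) * (e i \<bullet> v))"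
      using fx[of v v] by (simp add: Sv inner_commute)
    also have "\<dots> > 0"
    proof (rule sum_pos2[of _ j])
      show "0 < sqrt (lam j) * (e j \<bullet> v) * (e j \<bullet> v)" using j lampos[of j]
        by (metis mult.assoc mult_pos_pos real_sqrt_gt_zero not_real_square_gt_zero)
      show "\<And>i. i \<in> {..<?n} \<Longrightarrow> 0 \<le> sqrt (lam i) * (e i \<bullet> v) * (e i \<bullet> v)"
        using lampos by (simp add: mult.assoc less_imp_le)
    qed (use j in auto)
    finally show ?thesis .
  qed
  show ?thesis using SS Ssym Spos unfolding pos_def_def by blast
qed

lemma sqrt_unique:
  fixes S R :: "real^'n^'n"
  assumes S: "pos_def S" and R: "pos_def R" and eq: "S ** S = R ** R"
  shows "S = R"
proof -
  let ?n = "CARD('n)"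
  define D where "D = S - R"
  have sS: "transpose S = S" and sR: "transpose R = R" using S R unfolding pos_def_def by auto
  have Dv: "D *v v = S *v v - R *v v" for v unfolding D_def by (simp add: matrix_vector_mult_diff_rdistrib)
  have sD: "transpose D = D"
    by (rule sym_by_inner) (simp add: Dv inner_diff_left inner_diff_right sym_inner[OF sS] sym_inner[OF sR])
  obtain e mu where on: "\<forall>i<?n. \<forall>j<?n. e i \<bullet> e j = (if i = j then 1 else 0)"
     and ev: "\<forall>i<?n. D *v e i = mu i *\<^sub>R e i"
     and exp: "\<forall>v. v = (\<Sum>i<?n. (e i \<bullet> v) *\<^sub>R e i)"
    using spectral[OF sD] by blast
  have mu0: "mu i = 0" if i: "i < ?n" for i
  proof -
    let ?e = "e i"
    have ne: "?e \<noteq> 0" using on i by (metis inner_zero_left zero_neq_one)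
    have "S *v (S *v ?e) = R *v (R *v ?e)" using eq by (simp add: matrix_vector_mul_assoc)
    hence "0 = S *v (S *v ?e) - R *v (R *v ?e)" by simp
    also have "\<dots> = S *v (D *v ?e) + D *v (R *v ?e)"
      by (simp add: Dv matrix_vector_mult_diff_distrib)
    finally have "0 = ?e \<bullet> (S *v (D *v ?e)) + ?e \<bullet> (D *v (R *v ?e))" 
      by (metis inner_add_right inner_zero_right)
    also have "?e \<bullet> (D *v (R *v ?e)) = (D *v ?e) \<bullet> (R *v ?e)" using sym_inner[OF sD] by simp
    finally have "0 = mu i * (?e \<bullet> (S *v ?e) + ?e \<bullet> (R *v ?e))"
      using ev i by (simp add: matrix_vector_mult_scaleR algebra_simps)
    moreover have "?e \<bullet> (S *v ?e) + ?e \<bullet> (R *v ?e) > 0"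
      using S R ne unfolding pos_def_def by (simp add: add_pos_pos)
    ultimately show ?thesis by simp
  qed
  have "D *v v = 0" for v
  proof -
    have "D *v v = (\<Sum>i<?n. (e i \<bullet> v) *\<^sub>R (D *v e i))"
      using exp[rule_format, of v] mat_sum_apply[of D "\<lambda>i. e i \<bullet> v" e "{..<?n}"] by simp
    also have "\<dots> = 0" using ev mu0 by (intro sum.neutral) auto
    finally show ?thesis .
  qed
  thus ?thesis by (simp add: matrix_eq Dv)
qed

lemma msqrt_props:
  fixes Sig :: "real^'n^'n"
  assumes "pos_def Sig"
  shows "pos_def (msqrt Sig) \<and> msqrt Sig ** msqrt Sig = Sig"
proof -
  have "\<exists>!S. pos_def S \<and> S ** S = Sig"
    using sqrt_exists[OF assms] sqrt_unique by metis
  thus ?thesis unfolding msqrt_def by (rule theI')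
qed

lemma pos_def_psd: "pos_def S \<Longrightarrow> v \<bullet> (S *v v) \<ge> 0"
  unfolding pos_def_def by (cases "v = 0") (auto intro: less_imp_le)

lemma dual_cs:
  fixes Sig :: "real^'n^'n"
  assumes pd: "pos_def Sig"
  shows "\<bar>a \<bullet> u\<bar> \<le> mnorm (matrix_inv Sig) a * mnorm Sig u"
proof -
  have sym: "transpose Sig = Sig" using pd unfolding pos_def_def by simp
  have inv: "invertible Sig" by (rule pos_def_invertible[OF pd])
  define w where "w = matrix_inv Sig *v a"
  have Sw: "Sig *v w = a" unfolding w_def by (rule matrix_inv_vec(1)[OF inv])
  have "a \<bullet> u = w \<bullet> (Sig *v u)" using sym_inner[OF sym, of w u] Sw by simp
  hence "(a \<bullet> u)^2 \<le> (w \<bullet> (Sig *v w)) * (u \<bullet> (Sig *v u))"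
    using psd_cs[OF sym pos_def_psd[OF pd], of w u] by simp
  also have "w \<bullet> (Sig *v w) = a \<bullet> (matrix_inv Sig *v a)" using Sw w_def by (simp add: inner_commute)
  finally have "sqrt ((a \<bullet> u)^2) \<le> sqrt (a \<bullet> (matrix_inv Sig *v a) * (u \<bullet> (Sig *v u)))"
    by (rule real_sqrt_le_mono)
  thus ?thesis unfolding mnorm_def by (simp add: real_sqrt_mult)
qed

lemma key_sc:
  fixes A Sig :: "real^'n^'n"
  assumes pd: "pos_def Sig" and sA: "transpose A = A" and psd: "\<And>v. v \<bullet> (A *v v) \<ge> 0"
    and invA: "invertible A"
    and op: "opnorm (msqrt Sig ** matrix_inv A ** msqrt Sig) \<le> C"
  shows "u \<bullet> (Sig *v u) \<le> C * (u \<bullet> (A *v u))" "C \<ge> 0"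
proof -
  define S where "S = msqrt Sig"
  have Sp: "pos_def S" and SS: "S ** S = Sig" using msqrt_props[OF pd] unfolding S_def by auto
  have sS: "transpose S = S" using Sp unfolding pos_def_def by simp
  define B where "B = S ** matrix_inv A ** S"
  have nB: "norm (B *v x) \<le> C * norm x" for x
  proof -
    have "norm (B *v x) \<le> onorm (\<lambda>x. B *v x) * norm x"
      by (rule onorm) simp
    also have "\<dots> \<le> C * norm x" using op unfolding opnorm_def B_def S_def
      by (intro mult_right_mono) auto
    finally show ?thesis .
  qed
  show C0: "C \<ge> 0" using op onorm_pos_le[of "\<lambda>x. B *v x"] unfolding opnorm_def B_def S_def by simp
  have Sigv: "Sig *v v = S *v (S *v v)" for v using SS by (simp add: matrix_vector_mul_assoc)
  define z where "z = matrix_inv A *v (Sig *v u)"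
  have Az: "A *v z = Sig *v u" unfolding z_def by (rule matrix_inv_vec(1)[OF invA])
  define q where "q = u \<bullet> (Sig *v u)"
  have q0: "q \<ge> 0" unfolding q_def by (rule pos_def_psd[OF pd])
  have "q = u \<bullet> (A *v z)" unfolding q_def Az ..
  hence "q^2 \<le> (u \<bullet> (A *v u)) * (z \<bullet> (A *v z))" using psd_cs[OF sA psd, of u z] by simp
  moreover have "z \<bullet> (A *v z) \<le> C * q"
  proof -
    have "z \<bullet> (A *v z) = (matrix_inv A *v (S *v (S *v u))) \<bullet> (S *v (S *v u))"
      by (simp add: Az, simp add: z_def Sigv)
    also have "\<dots> = (S *v (matrix_inv A *v (S *v (S *v u)))) \<bullet> (S *v u)"
      using sym_inner[OF sS] by simp
    also have "\<dots> = (B *v (S *v u)) \<bullet> (S *v u)" unfolding B_def by (simp add: matrix_vector_mul_assoc matrix_mul_assoc)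
    also have "\<dots> \<le> norm (B *v (S *v u)) * norm (S *v u)" by (rule norm_cauchy_schwarz)
    also have "\<dots> \<le> C * norm (S *v u) * norm (S *v u)" using nB by (intro mult_right_mono) auto
    also have "\<dots> = C * ((S *v u) \<bullet> (S *v u))" by (simp add: dot_square_norm power2_eq_square)
    also have "(S *v u) \<bullet> (S *v u) = q" unfolding q_def Sigv using sym_inner[OF sS] by simp
    finally show ?thesis .
  qed
  ultimately have "q^2 \<le> (u \<bullet> (A *v u)) * (C * q)"
    using psd[of u] by (meson mult_left_mono order_trans)
  hence "q * q \<le> (C * (u \<bullet> (A *v u))) * q" by (simp add: power2_eq_square mult_ac)
  thus "u \<bullet> (Sig *v u) \<le> C * (u \<bullet> (A *v u))"
    using q0 C0 psd[of u] unfolding q_def[symmetric]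
    by (cases "q = 0") (auto simp: mult_le_cancel_right)
qed

definition nice :: "(real^'d \<Rightarrow> real) \<Rightarrow> bool" where
  "nice f \<longleftrightarrow> (\<forall>x. (f has_derivative (\<lambda>v. grad f x \<bullet> v)) (at x)) \<and>
     (\<forall>x. (grad f has_derivative (\<lambda>v. hess f x *v v)) (at x)) \<and> continuous_on UNIV (hess f)"

lemma grad_eq:
  assumes "(f has_derivative (\<lambda>v. G \<bullet> v)) (at x)"
  shows "grad f x = G"
proof -
  have "frechet_derivative f (at x) = (\<lambda>v. G \<bullet> v)" using frechet_derivative_at[OF assms] by simp
  thus ?thesis unfolding grad_def by (simp add: vec_eq_iff inner_axis)
qed

lemma hess_eq:
  fixes f :: "real^'d \<Rightarrow> real"
  assumes "(grad f has_derivative (\<lambda>v. Hm *v v)) (at x)"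
  shows "hess f x = Hm"
proof -
  have "((\<lambda>y. grad f y $ i) has_derivative (\<lambda>v. (Hm *v v) $ i)) (at x)" for i
    using bounded_linear.has_derivative[OF bounded_linear_vec_nth assms] by simp
  hence "frechet_derivative (\<lambda>y. grad f y $ i) (at x) = (\<lambda>v. (Hm *v v) $ i)" for i
    using frechet_derivative_at by metis
  thus ?thesis unfolding hess_def by (simp add: vec_eq_iff matrix_vector_mult_basis column_def)
qed

lemma lin_real:
  fixes D :: "real^'d \<Rightarrow> real"
  assumes "linear D"
  shows "D v = (\<chi> j. D (axis j 1)) \<bullet> v"
proof -
  have "v = (\<Sum>j\<in>UNIV. v $ j *\<^sub>R axis j 1)"
    using basis_expansion[of v] by (simp add: scalar_mult_eq_scaleR)
  hence "D v = D (\<Sum>j\<in>UNIV. v $ j *\<^sub>R axis j 1)" by simp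
  also have "\<dots> = (\<Sum>j\<in>UNIV. D (v $ j *\<^sub>R axis j 1))"
    by (rule linear_sum[OF assms])
  also have "\<dots> = (\<Sum>j\<in>UNIV. v $ j * D (axis j 1))"
    by (simp add: linear_scale[OF assms])
  also have "\<dots> = (\<chi> j. D (axis j 1)) \<bullet> v" by (simp add: inner_vec_def mult.commute)
  finally show ?thesis .
qed

lemma C2_nice:
  fixes f :: "real^'d \<Rightarrow> real"
  assumes "C2 f" shows "nice f"
proof -
  have d1: "(f has_derivative (\<lambda>v. grad f x \<bullet> v)) (at x)" for x
  proof -
    let ?D = "frechet_derivative f (at x)"
    have hd: "(f has_derivative ?D) (at x)" using assms unfolding C2_def frechet_derivative_works by blast
    have "linear ?D" using has_derivative_linear[OF hd] .
    hence "?D = (\<lambda>v. (\<chi> j. ?D (axis j 1)) \<bullet> v)" using lin_real by blast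
    also have "(\<chi> j. ?D (axis j 1)) = grad f x" unfolding grad_def ..
    finally show ?thesis using hd by simp
  qed
  have d2: "(grad f has_derivative (\<lambda>v. hess f x *v v)) (at x)" for x
  proof -
    let ?G = "frechet_derivative (grad f) (at x)"
    have hd: "(grad f has_derivative ?G) (at x)" using assms unfolding C2_def frechet_derivative_works by blast
    have "linear ?G" using has_derivative_linear[OF hd] .
    hence "?G = (\<lambda>v. matrix ?G *v v)" using matrix_vector_mul(2) by metis
    hence hd2: "(grad f has_derivative (\<lambda>v. matrix ?G *v v)) (at x)" using hd by simp
    hence "hess f x = matrix ?G" by (rule hess_eq)
    thus ?thesis using hd2 by simp
  qed
  show ?thesis using d1 d2 assms unfolding nice_def C2_def by blast
qed

lemma nice_zero: "nice (\<lambda>x::real^'d. 0)"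
proof -
  have g: "((\<lambda>x::real^'d. 0::real) has_derivative (\<lambda>v. 0 \<bullet> v)) (at x)" for x
    by (simp add: has_derivative_const)
  hence gr: "grad (\<lambda>x::real^'d. 0::real) = (\<lambda>x. 0)" using grad_eq by blast
  have g2: "(grad (\<lambda>x::real^'d. 0::real) has_derivative (\<lambda>v. (0::real^'d^'d) *v v)) (at x)" for x
    unfolding gr by (simp add: has_derivative_const)
  hence h: "hess (\<lambda>x::real^'d. 0::real) = (\<lambda>x. 0)" using hess_eq by blast
  have c: "continuous_on UNIV (hess (\<lambda>x::real^'d. 0::real))" unfolding h by simp
  show ?thesis unfolding nice_def
  proof (intro conjI allI c)
    fix x show "((\<lambda>x::real^'d. 0::real) has_derivative (\<lambda>v. grad (\<lambda>x::real^'d. 0::real) x \<bullet> v)) (at x)"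
      unfolding gr using g[of x] by simp
    show "(grad (\<lambda>x::real^'d. 0::real) has_derivative (\<lambda>v. hess (\<lambda>x::real^'d. 0::real) x *v v)) (at x)"
      unfolding h using g2[of x] by simp
  qed
qed

lemma nice_add:
  fixes f g :: "real^'d \<Rightarrow> real"
  assumes f: "nice f" and g: "nice g"
  shows "nice (\<lambda>x. f x + g x)"
proof -
  have d1: "((\<lambda>x. f x + g x) has_derivative (\<lambda>v. (grad f x + grad g x) \<bullet> v)) (at x)" for x
    using has_derivative_add[of f _ _ g] f g unfolding nice_def by (simp add: inner_add_left)
  hence gr: "grad (\<lambda>x. f x + g x) = (\<lambda>x. grad f x + grad g x)" using grad_eq by blast
  have d2: "(grad (\<lambda>x. f x + g x) has_derivative (\<lambda>v. (hess f x + hess g x) *v v)) (at x)" for x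
    unfolding gr using has_derivative_add[of "grad f" _ _ "grad g"] f g unfolding nice_def
    by (simp add: matrix_vector_mult_add_rdistrib)
  hence h: "hess (\<lambda>x. f x + g x) = (\<lambda>x. hess f x + hess g x)" using hess_eq by blast
  have "continuous_on UNIV (\<lambda>x. hess f x + hess g x)"
    using f g unfolding nice_def by (intro continuous_on_add) auto
  thus ?thesis unfolding nice_def using d1 d2 gr h by simp
qed

lemma nice_sum:
  fixes l :: "nat \<Rightarrow> real^'d \<Rightarrow> real"
  assumes "finite I" "\<And>i. i \<in> I \<Longrightarrow> nice (l i)"
  shows "nice (\<lambda>x. \<Sum>i\<in>I. l i x)"
  using assms
proof (induction I rule: finite_induct)
  case empty thus ?case using nice_zero by simp
next
  case (insert i F)
  have "nice (\<lambda>x. l i x + (\<Sum>i\<in>F. l i x))"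
    using insert by (intro nice_add) auto
  thus ?case using insert by simp
qed

lemma path_deriv: "((\<lambda>t. x + t *\<^sub>R d) has_derivative (\<lambda>h. h *\<^sub>R d)) (at t)"
  by (auto intro!: derivative_eq_intros)

lemma line_deriv1:
  fixes f :: "real^'d \<Rightarrow> real"
  assumes "nice f"
  shows "((\<lambda>t. f (x + t *\<^sub>R d)) has_real_derivative (grad f (x + t *\<^sub>R d) \<bullet> d)) (at t)"
proof -
  have "((\<lambda>t. f (x + t *\<^sub>R d)) has_derivative (\<lambda>h. grad f (x + t *\<^sub>R d) \<bullet> (h *\<^sub>R d))) (at t)"
    using has_derivative_compose[OF path_deriv] assms unfolding nice_def by blast
  moreover have "(\<lambda>h. grad f (x + t *\<^sub>R d) \<bullet> (h *\<^sub>R d)) = (*) (grad f (x + t *\<^sub>R d) \<bullet> d)"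
    by (simp add: fun_eq_iff mult.commute)
  ultimately show ?thesis by (simp add: has_field_derivative_def)
qed

lemma line_deriv2:
  fixes f :: "real^'d \<Rightarrow> real"
  assumes "nice f"
  shows "((\<lambda>t. grad f (x + t *\<^sub>R d) \<bullet> u) has_real_derivative (u \<bullet> (hess f (x + t *\<^sub>R d) *v d))) (at t)"
proof -
  have "((\<lambda>t. grad f (x + t *\<^sub>R d)) has_derivative (\<lambda>h. hess f (x + t *\<^sub>R d) *v (h *\<^sub>R d))) (at t)"
    using has_derivative_compose[OF path_deriv] assms unfolding nice_def by blast
  hence "((\<lambda>t. grad f (x + t *\<^sub>R d) \<bullet> u) has_derivative (\<lambda>h. (hess f (x + t *\<^sub>R d) *v (h *\<^sub>R d)) \<bullet> u)) (at t)"
    using bounded_linear.has_derivative[OF bounded_linear_inner_left] by blast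
  moreover have "(\<lambda>h. (hess f (x + t *\<^sub>R d) *v (h *\<^sub>R d)) \<bullet> u) = (*) (u \<bullet> (hess f (x + t *\<^sub>R d) *v d))"
    by (simp add: fun_eq_iff matrix_vector_mult_scaleR inner_commute mult.commute)
  ultimately show ?thesis by (simp add: has_field_derivative_def)
qed

lemma bl_mv: "bounded_linear (\<lambda>M::real^'n^'m. M *v b)"
proof -
  have "linear (\<lambda>M::real^'n^'m. M *v b)"
    by (rule linearI) (simp_all add: matrix_vector_mult_add_rdistrib scaleR_matrix_vector_assoc)
  thus ?thesis by (simp add: linear_conv_bounded_linear)
qed

lemma hess_form_cont:
  fixes f :: "real^'d \<Rightarrow> real"
  assumes "nice f"
  shows "continuous_on UNIV (\<lambda>y. a \<bullet> (hess f y *v b))"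
proof -
  have c: "continuous_on UNIV (hess f)" using assms unfolding nice_def by blast
  have "continuous_on UNIV (\<lambda>y. hess f y *v b)"
    using continuous_on_compose[OF c bounded_linear.continuous_on[OF bl_mv continuous_on_id]]
    by (simp add: o_def)
  thus ?thesis by (intro continuous_intros)
qed

lemma delta_rep:
  fixes f :: "real^'d \<Rightarrow> real"
  assumes nf: "nice f" and t: "t > 0"
  shows "\<exists>s r. 0 < s \<and> s < t \<and> 0 < r \<and> r < t \<and>
    f (x + t *\<^sub>R b + t *\<^sub>R a) - f (x + t *\<^sub>R a) - f (x + t *\<^sub>R b) + f x
      = t^2 * (a \<bullet> (hess f (x + s *\<^sub>R a + r *\<^sub>R b) *v b))"
proof -
  define g where "g = (\<lambda>s. f ((x + t *\<^sub>R b) + s *\<^sub>R a) - f (x + s *\<^sub>R a))"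
  have gd: "DERIV g s :> (grad f ((x + t *\<^sub>R b) + s *\<^sub>R a) \<bullet> a - grad f (x + s *\<^sub>R a) \<bullet> a)" for s
    unfolding g_def by (intro DERIV_diff line_deriv1[OF nf])
  obtain s where s: "0 < s" "s < t" and gs: "g t - g 0 = (t - 0) * (grad f ((x + t *\<^sub>R b) + s *\<^sub>R a) \<bullet> a - grad f (x + s *\<^sub>R a) \<bullet> a)"
    using MVT2[OF t gd] by blast
  define h where "h = (\<lambda>r. grad f ((x + s *\<^sub>R a) + r *\<^sub>R b) \<bullet> a)"
  have hd: "DERIV h r :> (a \<bullet> (hess f ((x + s *\<^sub>R a) + r *\<^sub>R b) *v b))" for r
    unfolding h_def by (rule line_deriv2[OF nf])
  obtain r where r: "0 < r" "r < t" and hr: "h t - h 0 = (t - 0) * (a \<bullet> (hess f ((x + s *\<^sub>R a) + r *\<^sub>R b) *v b))"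
    using MVT2[OF t hd] by blast
  have "h t - h 0 = grad f ((x + t *\<^sub>R b) + s *\<^sub>R a) \<bullet> a - grad f (x + s *\<^sub>R a) \<bullet> a"
    unfolding h_def by (simp add: algebra_simps)
  hence "g t - g 0 = t^2 * (a \<bullet> (hess f (x + s *\<^sub>R a + r *\<^sub>R b) *v b))"
    using gs hr by (simp add: power2_eq_square)
  moreover have "g t - g 0 = f (x + t *\<^sub>R b + t *\<^sub>R a) - f (x + t *\<^sub>R a) - f (x + t *\<^sub>R b) + f x"
    unfolding g_def by simp
  ultimately show ?thesis using s r by metis
qed

lemma hess_sym_form:
  fixes f :: "real^'d \<Rightarrow> real"
  assumes nf: "nice f"
  shows "a \<bullet> (hess f x *v b) = b \<bullet> (hess f x *v a)"
proof (rule ccontr)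
  let ?c1 = "\<lambda>y. a \<bullet> (hess f y *v b)" and ?c2 = "\<lambda>y. b \<bullet> (hess f y *v a)"
  assume ne: "?c1 x \<noteq> ?c2 x"
  define e where "e = \<bar>?c1 x - ?c2 x\<bar> / 2"
  have e: "e > 0" using ne unfolding e_def by simp
  obtain d1 where d1: "d1 > 0" "\<And>y. dist y x < d1 \<Longrightarrow> dist (?c1 y) (?c1 x) < e"
    using hess_form_cont[OF nf, of a b] e unfolding continuous_on_iff by (metis UNIV_I)
  obtain d2 where d2: "d2 > 0" "\<And>y. dist y x < d2 \<Longrightarrow> dist (?c2 y) (?c2 x) < e"
    using hess_form_cont[OF nf, of b a] e unfolding continuous_on_iff by (metis UNIV_I)
  define t where "t = min d1 d2 / (norm a + norm b + 1)"
  have N: "norm a + norm b + 1 > 0" by (smt (verit) norm_ge_zero)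
  have t: "t > 0" unfolding t_def using d1 d2 N by (intro divide_pos_pos) auto
  have close: "dist (x + s *\<^sub>R p + r *\<^sub>R q) x < min d1 d2"
    if "0 < s" "s < t" "0 < r" "r < t" "norm p + norm q \<le> norm a + norm b" for s r and p q :: "real^'d"
  proof -
    have "dist (x + s *\<^sub>R p + r *\<^sub>R q) x = norm (s *\<^sub>R p + r *\<^sub>R q)" by (simp add: dist_norm)
    also have "\<dots> \<le> s * norm p + r * norm q"
      using norm_triangle_ineq[of "s *\<^sub>R p" "r *\<^sub>R q"] that by simp
    also have "\<dots> \<le> t * norm p + t * norm q"
      using that by (intro add_mono mult_right_mono) auto
    also have "\<dots> \<le> t * (norm a + norm b)" using that t by (simp add: distrib_left[symmetric])
    also have "\<dots> < t * (norm a + norm b + 1)" using t by simp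
    also have "\<dots> = min d1 d2" unfolding t_def using N by simp
    finally show ?thesis .
  qed
  obtain s r where sr: "0 < s" "s < t" "0 < r" "r < t" and eq1:
    "f (x + t *\<^sub>R b + t *\<^sub>R a) - f (x + t *\<^sub>R a) - f (x + t *\<^sub>R b) + f x
      = t^2 * (a \<bullet> (hess f (x + s *\<^sub>R a + r *\<^sub>R b) *v b))"
    using delta_rep[OF nf t] by blast
  obtain s' r' where sr': "0 < s'" "s' < t" "0 < r'" "r' < t" and eq2:
    "f (x + t *\<^sub>R a + t *\<^sub>R b) - f (x + t *\<^sub>R b) - f (x + t *\<^sub>R a) + f x
      = t^2 * (b \<bullet> (hess f (x + s' *\<^sub>R b + r' *\<^sub>R a) *v a))"
    using delta_rep[OF nf t] by blast
  have "t^2 * ?c1 (x + s *\<^sub>R a + r *\<^sub>R b) = t^2 * ?c2 (x + s' *\<^sub>R b + r' *\<^sub>R a)"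
    using eq1 eq2 by (simp add: algebra_simps)
  hence eqc: "?c1 (x + s *\<^sub>R a + r *\<^sub>R b) = ?c2 (x + s' *\<^sub>R b + r' *\<^sub>R a)" using t by simp
  have "dist (?c1 (x + s *\<^sub>R a + r *\<^sub>R b)) (?c1 x) < e"
    using d1(2) close[OF sr order_refl] by simp
  moreover have "dist (?c2 (x + s' *\<^sub>R b + r' *\<^sub>R a)) (?c2 x) < e"
    using d2(2) close[OF sr', of b a] by (simp add: add.commute)
  ultimately have "\<bar>?c1 x - ?c2 x\<bar> < 2 * e" using eqc unfolding dist_real_def by linarith
  thus False unfolding e_def by simp
qed

lemma hess_sym:
  fixes f :: "real^'d \<Rightarrow> real"
  assumes nf: "nice f"
  shows "transpose (hess f x) = hess f x"
  by (rule sym_by_inner) (metis hess_sym_form[OF nf] inner_commute)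

lemma tangent:
  fixes f :: "real^'d \<Rightarrow> real"
  assumes cv: "convex_on UNIV f" and nf: "nice f"
  shows "f y - f x \<ge> grad f x \<bullet> (y - x)"
proof -
  define phi where "phi = (\<lambda>t. f (x + t *\<^sub>R (y - x)))"
  have cphi: "convex_on UNIV phi"
  proof (rule convex_onI)
    fix t p q :: real assume t: "t > 0" "t < 1"
    have "x + ((1 - t) *\<^sub>R p + t *\<^sub>R q) *\<^sub>R (y - x) = (1 - t) *\<^sub>R (x + p *\<^sub>R (y - x)) + t *\<^sub>R (x + q *\<^sub>R (y - x))"
      by (simp add: algebra_simps)
    hence "phi ((1 - t) *\<^sub>R p + t *\<^sub>R q) = f ((1 - t) *\<^sub>R (x + p *\<^sub>R (y - x)) + t *\<^sub>R (x + q *\<^sub>R (y - x)))"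
      unfolding phi_def by simp
    also have "\<dots> \<le> (1 - t) * f (x + p *\<^sub>R (y - x)) + t * f (x + q *\<^sub>R (y - x))"
      using t by (intro convex_onD[OF cv]) auto
    finally show "phi ((1 - t) *\<^sub>R p + t *\<^sub>R q) \<le> (1 - t) * phi p + t * phi q" unfolding phi_def .
  qed simp
  have "(phi has_field_derivative (grad f (x + 0 *\<^sub>R (y - x)) \<bullet> (y - x))) (at 0 within UNIV)"
    unfolding phi_def by (rule line_deriv1[OF nf])
  hence "phi 1 - phi 0 \<ge> (grad f (x + 0 *\<^sub>R (y - x)) \<bullet> (y - x)) * (1 - 0)"
    by (intro convex_on_imp_above_tangent[OF cphi]) auto
  thus ?thesis unfolding phi_def by simp
qed

lemma grad_mono:
  fixes f :: "real^'d \<Rightarrow> real"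
  assumes cv: "convex_on UNIV f" and nf: "nice f"
  shows "(grad f y - grad f x) \<bullet> (y - x) \<ge> 0"
proof -
  have "f y - f x \<ge> grad f x \<bullet> (y - x)" "f x - f y \<ge> grad f y \<bullet> (x - y)"
    using tangent[OF cv nf] by auto
  moreover have "grad f y \<bullet> (x - y) = - (grad f y \<bullet> (y - x))" by (simp add: inner_diff_right)
  ultimately show ?thesis by (simp add: inner_diff_left)
qed

lemma hess_psd:
  fixes f :: "real^'d \<Rightarrow> real"
  assumes cv: "convex_on UNIV f" and nf: "nice f"
  shows "v \<bullet> (hess f x *v v) \<ge> 0"
proof (rule ccontr)
  assume neg: "\<not> ?thesis"
  define psi where "psi = (\<lambda>t. grad f (x + t *\<^sub>R v) \<bullet> v)"
  have dv: "DERIV psi 0 :> (v \<bullet> (hess f (x + 0 *\<^sub>R v) *v v))"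
    unfolding psi_def by (rule line_deriv2[OF nf])
  have "v \<bullet> (hess f (x + 0 *\<^sub>R v) *v v) < 0" using neg by simp
  from DERIV_neg_dec_right[OF dv this] obtain d where d0: "d > 0" and d1: "\<forall>h > 0. h < d \<longrightarrow> psi 0 > psi (0 + h)"
    by blast
  have d: "d > 0" "\<And>h. h > 0 \<Longrightarrow> h < d \<Longrightarrow> psi 0 > psi (0 + h)" using d0 d1 by auto
  define h where "h = d / 2"
  have h: "h > 0" "h < d" using d unfolding h_def by auto
  have "(grad f (x + h *\<^sub>R v) - grad f x) \<bullet> ((x + h *\<^sub>R v) - x) \<ge> 0"
    by (rule grad_mono[OF cv nf])
  hence "h * (psi h - psi 0) \<ge> 0" unfolding psi_def by (simp add: inner_diff_left)
  hence "psi h \<ge> psi 0" using h by (simp add: zero_le_mult_iff)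
  thus False using d(2)[OF h] by simp
qed

lemma mnorm_scale: "mnorm S (c *\<^sub>R u) = \<bar>c\<bar> * mnorm S u"
proof -
  have "(c *\<^sub>R u) \<bullet> (S *v (c *\<^sub>R u)) = c^2 * (u \<bullet> (S *v u))"
    by (simp add: matrix_vector_mult_scaleR power2_eq_square)
  thus ?thesis unfolding mnorm_def by (simp add: real_sqrt_mult)
qed

lemma inv_psd:
  fixes S :: "real^'n^'n"
  assumes pd: "pos_def S"
  shows "v \<bullet> (matrix_inv S *v v) \<ge> 0"
proof -
  define w where "w = matrix_inv S *v v"
  have "S *v w = v" unfolding w_def by (rule matrix_inv_vec(1)[OF pos_def_invertible[OF pd]])
  hence "v \<bullet> w = w \<bullet> (S *v w)" by (simp add: inner_commute)
  thus ?thesis using pos_def_psd[OF pd, of w] unfolding w_def by simp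
qed

theorem mainTheorem1:
  fixes l :: "nat \<Rightarrow> real^'d \<Rightarrow> real"
    and n :: nat and T :: "nat set"
    and \<theta>hat \<theta>T :: "real^'d"
    and \<Sigma> :: "real^'d^'d"
    and r C_op C_h :: real
  defines "L \<equiv> (\<lambda>\<theta>. \<Sum>i\<in>{1..n} - T. l i \<theta>)"
  defines "H \<equiv> hess L \<theta>hat"
  defines "\<theta>NS \<equiv> \<theta>hat - matrix_inv H *v grad L \<theta>hat"
  assumes C2: "\<And>i. i \<in> {1..n} \<Longrightarrow> C2 (l i)"
    and T: "T \<subseteq> {1..n}"
    and convex: "convex_on UNIV L"
    and stat: "(\<Sum>i=1..n. grad (l i) \<theta>hat) = 0"
    and statT: "grad L \<theta>T = 0"
    and Hinv: "invertible H"
    and Sigma: "pos_def \<Sigma>"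
    and r: "r > 0"
    and sc: "\<And>\<theta>. mnorm \<Sigma> (\<theta> - \<theta>NS) \<le> r \<Longrightarrow>
               invertible (hess L \<theta>) \<and>
               opnorm (msqrt \<Sigma> ** matrix_inv (hess L \<theta>) ** msqrt \<Sigma>) \<le> C_op"
    and lip: "\<And>t. t \<in> {0..1} \<Longrightarrow>
               mnorm (matrix_inv \<Sigma>)
                 ((hess L (t *\<^sub>R \<theta>hat + (1 - t) *\<^sub>R \<theta>NS) - H) *v (matrix_inv H *v grad L \<theta>hat))
               \<le> C_h"
    and small: "C_h * C_op < r"
  shows "mnorm \<Sigma> (\<theta>T - \<theta>NS) \<le> C_h * C_op"
proof -
  have nL: "nice L" unfolding L_def
    by (rule nice_sum) (use C2 C2_nice in auto)
  define g where "g = grad L \<theta>hat"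
  define d where "d = matrix_inv H *v g"
  have NS: "\<theta>NS = \<theta>hat - d" unfolding \<theta>NS_def d_def g_def ..
  have Hd: "H *v d = g" unfolding d_def by (rule matrix_inv_vec(1)[OF Hinv])
  have Cop0: "C_op \<ge> 0"
  proof -
    have "mnorm \<Sigma> (\<theta>NS - \<theta>NS) \<le> r" using r by (simp add: mnorm_def)
    from sc[OF this] show ?thesis
      using key_sc(2)[OF Sigma hess_sym[OF nL] hess_psd[OF convex nL]] by blast
  qed
  have gNS: "grad L \<theta>NS \<bullet> u \<ge> - (C_h * mnorm \<Sigma> u)" for u
  proof -
    define chi where "chi = (\<lambda>t. grad L (\<theta>NS + t *\<^sub>R d) \<bullet> u - t * (g \<bullet> u))"
    have dchi: "DERIV chi t :> (u \<bullet> (hess L (\<theta>NS + t *\<^sub>R d) *v d) - g \<bullet> u)" for t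
    proof -
      have "((\<lambda>t. t * (g \<bullet> u)) has_real_derivative (g \<bullet> u)) (at t)"
        by (auto intro!: derivative_eq_intros)
      thus ?thesis unfolding chi_def by (intro DERIV_diff line_deriv2[OF nL])
    qed
    obtain xi where xi: "0 < xi" "xi < 1" and mv: "chi 1 - chi 0 = (1 - 0) * (u \<bullet> (hess L (\<theta>NS + xi *\<^sub>R d) *v d) - g \<bullet> u)"
      using MVT2[of 0 1 chi, OF _ dchi] by auto
    have "chi 1 = 0" unfolding chi_def NS g_def by simp
    moreover have "chi 0 = grad L \<theta>NS \<bullet> u" unfolding chi_def by simp
    moreover have "u \<bullet> (hess L (\<theta>NS + xi *\<^sub>R d) *v d) - g \<bullet> u
        = ((hess L (xi *\<^sub>R \<theta>hat + (1 - xi) *\<^sub>R \<theta>NS) - H) *v d) \<bullet> u"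
    proof -
      have "\<theta>NS + xi *\<^sub>R d = xi *\<^sub>R \<theta>hat + (1 - xi) *\<^sub>R \<theta>NS" unfolding NS by (simp add: algebra_simps)
      thus ?thesis using Hd by (simp add: matrix_vector_mult_diff_rdistrib inner_diff_left inner_diff_right inner_commute)
    qed
    moreover have "\<bar>((hess L (xi *\<^sub>R \<theta>hat + (1 - xi) *\<^sub>R \<theta>NS) - H) *v d) \<bullet> u\<bar> \<le> C_h * mnorm \<Sigma> u"
    proof -
      have "\<bar>((hess L (xi *\<^sub>R \<theta>hat + (1 - xi) *\<^sub>R \<theta>NS) - H) *v d) \<bullet> u\<bar>
          \<le> mnorm (matrix_inv \<Sigma>) ((hess L (xi *\<^sub>R \<theta>hat + (1 - xi) *\<^sub>R \<theta>NS) - H) *v d) * mnorm \<Sigma> u"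
        by (rule dual_cs[OF Sigma])
      also have "\<dots> \<le> C_h * mnorm \<Sigma> u"
        using lip[of xi] xi pos_def_psd[OF Sigma, of u] unfolding d_def g_def by (intro mult_right_mono) (auto simp: mnorm_def)
      finally show ?thesis .
    qed
    ultimately show ?thesis using mv by (auto simp: abs_le_iff)
  qed
  show ?thesis
  proof (rule ccontr)
    define u where "u = \<theta>T - \<theta>NS"
    define D where "D = mnorm \<Sigma> u"
    assume "\<not> ?thesis"
    hence DC: "D > C_h * C_op" unfolding D_def u_def by simp
    have D0: "D \<ge> 0" unfolding D_def mnorm_def using pos_def_psd[OF Sigma, of u] by simp
    have Ch0: "C_h \<ge> 0"
    proof -
      have "0 \<le> mnorm (matrix_inv \<Sigma>) ((hess L (0 *\<^sub>R \<theta>hat + (1 - 0) *\<^sub>R \<theta>NS) - H) *v (matrix_inv H *v grad L \<theta>hat))"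
        unfolding mnorm_def using inv_psd[OF Sigma] by simp
      thus ?thesis using lip[of 0] by simp
    qed
    have Dpos: "D > 0" using DC Ch0 Cop0 by (smt (verit) mult_nonneg_nonneg)
    have uSu: "u \<bullet> (\<Sigma> *v u) = D^2"
      unfolding D_def mnorm_def using pos_def_psd[OF Sigma, of u] by simp
    define phi where "phi = (\<lambda>s. grad L (\<theta>NS + s *\<^sub>R u) \<bullet> u)"
    have dphi: "DERIV phi s :> (u \<bullet> (hess L (\<theta>NS + s *\<^sub>R u) *v u))" for s
      unfolding phi_def by (rule line_deriv2[OF nL])
    define s1 where "s1 = min 1 (r / D)"
    have s1pos: "s1 > 0" unfolding s1_def using r Dpos by simp
    have s1le: "s1 \<le> 1" unfolding s1_def by simp
    have s1D: "s1 * D = min D r" unfolding s1_def using Dpos by (auto simp: min_def)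
    obtain xi where xi: "0 < xi" "xi < s1" and mv: "phi s1 - phi 0 = (s1 - 0) * (u \<bullet> (hess L (\<theta>NS + xi *\<^sub>R u) *v u))"
      using MVT2[OF s1pos dphi] by blast
    have sc_xi: "D^2 \<le> C_op * (u \<bullet> (hess L (\<theta>NS + xi *\<^sub>R u) *v u))"
    proof -
      have "mnorm \<Sigma> ((\<theta>NS + xi *\<^sub>R u) - \<theta>NS) = xi * D"
        using xi s1pos by (simp add: mnorm_scale D_def)
      also have "\<dots> \<le> s1 * D" using xi D0 by (intro mult_right_mono) auto
      also have "\<dots> \<le> r" using s1D by simp
      finally have "mnorm \<Sigma> ((\<theta>NS + xi *\<^sub>R u) - \<theta>NS) \<le> r" .
      from sc[OF this] have "invertible (hess L (\<theta>NS + xi *\<^sub>R u))"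
        "opnorm (msqrt \<Sigma> ** matrix_inv (hess L (\<theta>NS + xi *\<^sub>R u)) ** msqrt \<Sigma>) \<le> C_op" by auto
      from key_sc(1)[OF Sigma hess_sym[OF nL] hess_psd[OF convex nL] this, of u]
      show ?thesis using uSu by simp
    qed
    have p0: "phi 0 \<ge> - (C_h * D)" using gNS[of u] unfolding phi_def D_def by simp
    have "C_op * phi s1 = C_op * phi 0 + s1 * (C_op * (u \<bullet> (hess L (\<theta>NS + xi *\<^sub>R u) *v u)))"
      using mv by (simp add: algebra_simps)
    also have "\<dots> \<ge> C_op * (- (C_h * D)) + s1 * D^2"
      using p0 sc_xi Cop0 s1pos by (intro add_mono mult_left_mono) auto
    finally have "C_op * phi s1 \<ge> D * (s1 * D - C_h * C_op)" by (simp add: algebra_simps power2_eq_square)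
    moreover have "D * (s1 * D - C_h * C_op) > 0" using Dpos s1D DC small by (intro mult_pos_pos) auto
    ultimately have "C_op * phi s1 > 0" by linarith
    hence ps1: "phi s1 > 0" using Cop0 by (smt (verit) mult_nonneg_nonpos)
    have "(grad L (\<theta>NS + 1 *\<^sub>R u) - grad L (\<theta>NS + s1 *\<^sub>R u)) \<bullet> ((\<theta>NS + 1 *\<^sub>R u) - (\<theta>NS + s1 *\<^sub>R u)) \<ge> 0"
      by (rule grad_mono[OF convex nL])
    moreover have "\<theta>NS + 1 *\<^sub>R u = \<theta>T" unfolding u_def by simp
    ultimately have "(- grad L (\<theta>NS + s1 *\<^sub>R u)) \<bullet> ((1 - s1) *\<^sub>R u) \<ge> 0"
      using statT by (simp add: algebra_simps)
    hence "(1 - s1) * phi s1 \<le> 0" unfolding phi_def by (simp add: inner_commute)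
    moreover have "phi 1 = 0" unfolding phi_def using statT \<open>\<theta>NS + 1 *\<^sub>R u = \<theta>T\<close> by simp
    ultimately show False using ps1 s1le
      by (cases "s1 = 1") (auto simp: mult_le_0_iff)
  qed
qed

end
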